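(* For every $x\in\Gamma^\circ$ and $i\in\{0,1\}$, the map $(s,t)\mapsto\Psi_i^{(s,t)}(x)$ is a diffeomorphism from $R_i(x)$ onto its image $\Psi_i^{R_i(x)}(x)$, and from $L_i(x)$ onto its image $\Psi_i^{L_i(x)}(x)$.
   Context: Fix $\alpha>\beta>0$. For $i\in\{0,1\}$ let $\Phi_i^t(x_1,x_2)=(i+(x_1-i)e^{-\alpha t},\, i+(x_2-i)e^{-\beta t})$ ($t\in\mathbb{R}$) and $\Psi_i^t=\Phi_i^{-t}$. For $s,t>0$ set $\Psi_i^{(s,t)}=(\Phi_i^t\circ\Phi_{1-i}^s)^{-1}=\Psi_{1-i}^s\circ\Psi_i^t$. Let $\Gamma=\{(x_1,x_2): 0\le x_2\le1,\ x_2^{\alpha/\beta}\le x_1\le 1-(1-x_2)^{\alpha/\beta}\}$, $\Gamma^\circ$ its interior, $\Gamma_r=\{x\in\Gamma^\circ: x_1>x_2\}$, $\Gamma_l=\{x\in\Gamma^\circ:x_1<x_2\}$. For $x\in\Gamma^\circ$ let $T_i^2(x)=\{(s,t)\in(0,\infty)^2:\Psi_i^{(s,t)}(x)\in\Gamma^\circ\}$, $R_i(x)=\{(s,t)\in T_i^2(x):\Psi_i^t(x)\in\Gamma_r\}$ and $L_i(x)=\{(s,t)\in T_i^2(x):\Psi_i^t(x)\in\Gamma_l\}$; $\Psi_i^{A}(x)$ denotes $\{\Psi_i^{(s,t)}(x):(s,t)\in A\}$. *)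

theory Defs
  imports "HOL-Analysis.Analysis"
begin

definition Phi :: "real \<Rightarrow> real \<Rightarrow> real \<Rightarrow> real \<Rightarrow> real \<times> real \<Rightarrow> real \<times> real" where
  "Phi al be i t x = (i + (fst x - i) * exp (- al * t), i + (snd x - i) * exp (- be * t))"

definition Psi :: "real \<Rightarrow> real \<Rightarrow> real \<Rightarrow> real \<Rightarrow> real \<times> real \<Rightarrow> real \<times> real" where
  "Psi al be i t = Phi al be i (- t)"

definition Psi2 :: "real \<Rightarrow> real \<Rightarrow> real \<Rightarrow> real \<times> real \<Rightarrow> real \<times> real \<Rightarrow> real \<times> real" where
  "Psi2 al be i st = Psi al be (1 - i) (fst st) \<circ> Psi al be i (snd st)"

definition Gamma :: "real \<Rightarrow> real \<Rightarrow> (real \<times> real) set" where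
  "Gamma al be = {(x1, x2). 0 \<le> x2 \<and> x2 \<le> 1 \<and> x2 powr (al / be) \<le> x1
                    \<and> x1 \<le> 1 - (1 - x2) powr (al / be)}"

definition Gamma_r :: "real \<Rightarrow> real \<Rightarrow> (real \<times> real) set" where
  "Gamma_r al be = {x \<in> interior (Gamma al be). fst x > snd x}"

definition Gamma_l :: "real \<Rightarrow> real \<Rightarrow> (real \<times> real) set" where
  "Gamma_l al be = {x \<in> interior (Gamma al be). fst x < snd x}"

definition T2 :: "real \<Rightarrow> real \<Rightarrow> real \<Rightarrow> real \<times> real \<Rightarrow> (real \<times> real) set" where
  "T2 al be i x = {st. 0 < fst st \<and> 0 < snd st \<and> Psi2 al be i st x \<in> interior (Gamma al be)}"

definition Rset :: "real \<Rightarrow> real \<Rightarrow> real \<Rightarrow> real \<times> real \<Rightarrow> (real \<times> real) set" where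
  "Rset al be i x = {st \<in> T2 al be i x. Psi al be i (snd st) x \<in> Gamma_r al be}"

definition Lset :: "real \<Rightarrow> real \<Rightarrow> real \<Rightarrow> real \<times> real \<Rightarrow> (real \<times> real) set" where
  "Lset al be i x = {st \<in> T2 al be i x. Psi al be i (snd st) x \<in> Gamma_l al be}"

fun Ck_on :: "nat \<Rightarrow> (real \<times> real) set \<Rightarrow> (real \<times> real \<Rightarrow> real \<times> real) \<Rightarrow> bool" where
  "Ck_on 0 A f = continuous_on A f"
| "Ck_on (Suc k) A f =
     (\<exists>D1 D2. (\<forall>z\<in>A. (f has_derivative (\<lambda>h. fst h *\<^sub>R D1 z + snd h *\<^sub>R D2 z)) (at z))
              \<and> Ck_on k A D1 \<and> Ck_on k A D2)"

definition smooth_on :: "(real \<times> real) set \<Rightarrow> (real \<times> real \<Rightarrow> real \<times> real) \<Rightarrow> bool" where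
  "smooth_on A f = (\<forall>k. Ck_on k A f)"

definition diffeo_onto :: "(real \<times> real \<Rightarrow> real \<times> real) \<Rightarrow> (real \<times> real) set \<Rightarrow> (real \<times> real) set \<Rightarrow> bool" where
  "diffeo_onto f A B = (open A \<and> open B \<and> bij_betw f A B \<and> smooth_on A f \<and> smooth_on B (inv_into A f))"

end

theory Submission imports Defs begin

fun cks :: "nat \<Rightarrow> (real \<times> real) set \<Rightarrow> (real \<times> real \<Rightarrow> real) \<Rightarrow> bool" where
  "cks 0 A p = continuous_on A p"
| "cks (Suc k) A p = (\<exists>p1 p2. (\<forall>z\<in>A. (p has_derivative (\<lambda>h. fst h * p1 z + snd h * p2 z)) (at z))
      \<and> cks k A p1 \<and> cks k A p2)"

lemma cks_cont: "cks k A p \<Longrightarrow> continuous_on A p"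
proof (induction k arbitrary: p)
  case 0 then show ?case by simp
next
  case (Suc k)
  then obtain p1 p2 where "\<forall>z\<in>A. (p has_derivative (\<lambda>h. fst h * p1 z + snd h * p2 z)) (at z)" by auto
  then show ?case
    by (intro continuous_at_imp_continuous_on ballI) (auto intro: has_derivative_continuous)
qed

lemma cks_mono: "cks (Suc k) A p \<Longrightarrow> cks k A p"
proof (induction k arbitrary: p)
  case 0 show ?case unfolding cks.simps(1) by (rule cks_cont[OF 0])
next
  case (Suc k)
  from Suc.prems[unfolded cks.simps(2)[of "Suc k" A p]] obtain p1 p2 where pp: "\<forall>z\<in>A. (p has_derivative (\<lambda>h. fst h * p1 z + snd h * p2 z)) (at z)"
    "cks (Suc k) A p1" "cks (Suc k) A p2" by blast
  show ?case
    apply (simp only: cks.simps(2))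
    apply (rule exI[of _ p1], rule exI[of _ p2])
    by (intro conjI pp(1) Suc.IH pp(2) pp(3))
qed

lemma cks_const: "cks k A (\<lambda>z. c)"
proof (induction k arbitrary: c)
  case 0 then show ?case by simp
next
  case (Suc k)
  show ?case
    apply (simp only: cks.simps)
    apply (rule exI[of _ "\<lambda>z. 0"], rule exI[of _ "\<lambda>z. 0"])
    by (simp add: Suc)
qed

lemma cks_fst: "cks k A (\<lambda>z. fst z)"
proof (cases k)
  case 0 then show ?thesis by (simp add: continuous_on_fst)
next
  case (Suc n)
  show ?thesis unfolding Suc
    apply (simp only: cks.simps)
    apply (rule exI[of _ "\<lambda>z. 1"], rule exI[of _ "\<lambda>z. 0"])
    by (auto intro!: cks_const bounded_linear_imp_has_derivative bounded_linear_fst)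
qed

lemma cks_snd: "cks k A (\<lambda>z. snd z)"
proof (cases k)
  case 0 then show ?thesis by (simp add: continuous_on_snd)
next
  case (Suc n)
  show ?thesis unfolding Suc
    apply (simp only: cks.simps)
    apply (rule exI[of _ "\<lambda>z. 0"], rule exI[of _ "\<lambda>z. 1"])
    by (auto intro!: cks_const bounded_linear_imp_has_derivative bounded_linear_snd)
qed

lemma cks_add: "cks k A p \<Longrightarrow> cks k A q \<Longrightarrow> cks k A (\<lambda>z. p z + q z)"
proof (induction k arbitrary: p q)
  case 0 then show ?case by (simp add: continuous_on_add)
next
  case (Suc k)
  from Suc.prems(1)[unfolded cks.simps(2)] obtain p1 p2 where p: "\<forall>z\<in>A. (p has_derivative (\<lambda>h. fst h * p1 z + snd h * p2 z)) (at z)"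
    "cks k A p1" "cks k A p2" by blast
  from Suc.prems(2)[unfolded cks.simps(2)] obtain q1 q2 where q: "\<forall>z\<in>A. (q has_derivative (\<lambda>h. fst h * q1 z + snd h * q2 z)) (at z)"
    "cks k A q1" "cks k A q2" by blast
  show ?case
    apply (simp only: cks.simps)
    apply (rule exI[of _ "\<lambda>z. p1 z + q1 z"], rule exI[of _ "\<lambda>z. p2 z + q2 z"])
    apply (intro conjI ballI Suc.IH p q)
    subgoal for z using p(1) q(1)
      by (auto intro!: derivative_eq_intros simp: algebra_simps)
    done
qed

lemma cks_neg: "cks k A p \<Longrightarrow> cks k A (\<lambda>z. - p z)"
proof (induction k arbitrary: p)
  case 0 then show ?case by (simp add: continuous_on_minus)
next
  case (Suc k)
  from Suc.prems(1)[unfolded cks.simps(2)] obtain p1 p2 where p: "\<forall>z\<in>A. (p has_derivative (\<lambda>h. fst h * p1 z + snd h * p2 z)) (at z)"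
    "cks k A p1" "cks k A p2" by blast
  show ?case
    apply (simp only: cks.simps)
    apply (rule exI[of _ "\<lambda>z. - p1 z"], rule exI[of _ "\<lambda>z. - p2 z"])
    apply (intro conjI ballI Suc.IH p)
    subgoal for z using p(1)
      by (auto intro!: derivative_eq_intros simp: algebra_simps)
    done
qed

lemma cks_diff: "cks k A p \<Longrightarrow> cks k A q \<Longrightarrow> cks k A (\<lambda>z. p z - q z)"
  using cks_add[OF _ cks_neg, of k A p q] by simp

lemma cks_mult: "cks k A p \<Longrightarrow> cks k A q \<Longrightarrow> cks k A (\<lambda>z. p z * q z)"
proof (induction k arbitrary: p q)
  case 0 then show ?case by (simp add: continuous_on_mult)
next
  case (Suc k)
  from Suc.prems(1)[unfolded cks.simps(2)] obtain p1 p2 where p: "\<forall>z\<in>A. (p has_derivative (\<lambda>h. fst h * p1 z + snd h * p2 z)) (at z)"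
    "cks k A p1" "cks k A p2" by blast
  from Suc.prems(2)[unfolded cks.simps(2)] obtain q1 q2 where q: "\<forall>z\<in>A. (q has_derivative (\<lambda>h. fst h * q1 z + snd h * q2 z)) (at z)"
    "cks k A q1" "cks k A q2" by blast
  have pk: "cks k A p" and qk: "cks k A q" using cks_mono[OF Suc.prems(1)] cks_mono[OF Suc.prems(2)] by this+
  show ?case
    apply (simp only: cks.simps)
    apply (rule exI[of _ "\<lambda>z. p1 z * q z + p z * q1 z"], rule exI[of _ "\<lambda>z. p2 z * q z + p z * q2 z"])
    apply (intro conjI ballI cks_add Suc.IH p q pk qk)
    subgoal for z using p(1) q(1)
      by (auto intro!: derivative_eq_intros simp: algebra_simps)
    done
qed

lemma cks_exp: "cks k A p \<Longrightarrow> cks k A (\<lambda>z. exp (p z))"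
proof (induction k arbitrary: p)
  case 0 then show ?case by (simp add: continuous_on_exp)
next
  case (Suc k)
  from Suc.prems(1)[unfolded cks.simps(2)] obtain p1 p2 where p: "\<forall>z\<in>A. (p has_derivative (\<lambda>h. fst h * p1 z + snd h * p2 z)) (at z)"
    "cks k A p1" "cks k A p2" by blast
  have pk: "cks k A p" using cks_mono[OF Suc.prems(1)] .
  show ?case
    apply (simp only: cks.simps)
    apply (rule exI[of _ "\<lambda>z. exp (p z) * p1 z"], rule exI[of _ "\<lambda>z. exp (p z) * p2 z"])
    apply (intro conjI ballI cks_mult Suc.IH p pk)
    subgoal for z using p(1)
      by (auto intro!: derivative_eq_intros simp: algebra_simps)
    done
qed

lemma cks_inverse: "cks k A p \<Longrightarrow> (\<forall>z\<in>A. p z \<noteq> 0) \<Longrightarrow> cks k A (\<lambda>z. inverse (p z))"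
proof (induction k arbitrary: p)
  case 0 then show ?case by (simp add: continuous_on_inverse)
next
  case (Suc k)
  from Suc.prems(1)[unfolded cks.simps(2)] obtain p1 p2 where p: "\<forall>z\<in>A. (p has_derivative (\<lambda>h. fst h * p1 z + snd h * p2 z)) (at z)"
    "cks k A p1" "cks k A p2" by blast
  have pk: "cks k A p" using cks_mono[OF Suc.prems(1)] .
  have ik: "cks k A (\<lambda>z. inverse (p z))" by (rule Suc.IH[OF pk Suc.prems(2)])
  show ?case
    apply (simp only: cks.simps)
    apply (rule exI[of _ "\<lambda>z. - (inverse (p z) * inverse (p z) * p1 z)"],
           rule exI[of _ "\<lambda>z. - (inverse (p z) * inverse (p z) * p2 z)"])
    apply (intro conjI ballI cks_mult cks_neg ik p)
    subgoal for z using p(1) Suc.prems(2)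
      by (auto intro!: derivative_eq_intros simp: algebra_simps power2_eq_square)
    done
qed

lemma cks_comp:
  assumes "cks k A \<phi>" "cks k B g1" "cks k B g2" "\<forall>w\<in>B. (g1 w, g2 w) \<in> A"
  shows "cks k B (\<lambda>w. \<phi> (g1 w, g2 w))"
  using assms
proof (induction k arbitrary: \<phi> g1 g2)
  case 0
  have "continuous_on B (\<lambda>w. (g1 w, g2 w))" using 0 by (simp add: continuous_on_Pair)
  from continuous_on_compose2[OF _ this, of A \<phi>] show ?case using 0 by auto
next
  case (Suc k)
  from Suc.prems(1)[unfolded cks.simps(2)] obtain f1 f2 where f: "\<forall>z\<in>A. (\<phi> has_derivative (\<lambda>h. fst h * f1 z + snd h * f2 z)) (at z)"
    "cks k A f1" "cks k A f2" by blast
  from Suc.prems(2)[unfolded cks.simps(2)] obtain a1 a2 where a: "\<forall>z\<in>B. (g1 has_derivative (\<lambda>h. fst h * a1 z + snd h * a2 z)) (at z)"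
    "cks k B a1" "cks k B a2" by blast
  from Suc.prems(3)[unfolded cks.simps(2)] obtain b1 b2 where b: "\<forall>z\<in>B. (g2 has_derivative (\<lambda>h. fst h * b1 z + snd h * b2 z)) (at z)"
    "cks k B b1" "cks k B b2" by blast
  have gk: "cks k B g1" "cks k B g2" using cks_mono[OF Suc.prems(2)] cks_mono[OF Suc.prems(3)] by this+
  have c1: "cks k B (\<lambda>w. f1 (g1 w, g2 w))" and c2: "cks k B (\<lambda>w. f2 (g1 w, g2 w))"
    by (rule Suc.IH[OF f(2) gk Suc.prems(4)], rule Suc.IH[OF f(3) gk Suc.prems(4)])
  show ?case
    apply (simp only: cks.simps)
    apply (rule exI[of _ "\<lambda>w. a1 w * f1 (g1 w, g2 w) + b1 w * f2 (g1 w, g2 w)"],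
           rule exI[of _ "\<lambda>w. a2 w * f1 (g1 w, g2 w) + b2 w * f2 (g1 w, g2 w)"])
    apply (intro conjI ballI cks_mult cks_add a b c1 c2)
  proof -
    fix w assume w: "w \<in> B"
    have d1: "((\<lambda>w. (g1 w, g2 w)) has_derivative
       (\<lambda>h. (fst h * a1 w + snd h * a2 w, fst h * b1 w + snd h * b2 w))) (at w)"
      using a(1) b(1) w by (auto intro!: has_derivative_Pair)
    have d2: "(\<phi> has_derivative (\<lambda>h. fst h * f1 (g1 w, g2 w) + snd h * f2 (g1 w, g2 w))) (at (g1 w, g2 w))"
      using f(1) Suc.prems(4) w by blast
    have e: "(\<lambda>h. fst (h::real\<times>real) * (a1 w * f1 (g1 w, g2 w) + b1 w * f2 (g1 w, g2 w)) +
              snd h * (a2 w * f1 (g1 w, g2 w) + b2 w * f2 (g1 w, g2 w))) =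
        (\<lambda>h. fst (fst h * a1 w + snd h * a2 w, fst h * b1 w + snd h * b2 w) * f1 (g1 w, g2 w)
          + snd (fst h * a1 w + snd h * a2 w, fst h * b1 w + snd h * b2 w) * f2 (g1 w, g2 w))"
      by (rule ext) (simp add: algebra_simps)
    from has_derivative_compose[OF d1 d2]
    show "((\<lambda>w. \<phi> (g1 w, g2 w)) has_derivative
         (\<lambda>h. fst h * (a1 w * f1 (g1 w, g2 w) + b1 w * f2 (g1 w, g2 w)) +
              snd h * (a2 w * f1 (g1 w, g2 w) + b2 w * f2 (g1 w, g2 w)))) (at w)"
      unfolding e .
  qed
qed

lemma Ck_of_cks:
  "cks k A (\<lambda>z. fst (f z)) \<Longrightarrow> cks k A (\<lambda>z. snd (f z)) \<Longrightarrow> Ck_on k A f"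
proof (induction k arbitrary: f)
  case 0
  have e: "(\<lambda>z. (fst (f z), snd (f z))) = f" by auto
  show ?case using continuous_on_Pair[OF 0[simplified]] unfolding e by simp
next
  case (Suc k)
  from Suc.prems(1)[unfolded cks.simps(2)] obtain p1 p2 where p: "\<forall>z\<in>A. ((\<lambda>z. fst (f z)) has_derivative (\<lambda>h. fst h * p1 z + snd h * p2 z)) (at z)"
    "cks k A p1" "cks k A p2" by blast
  from Suc.prems(2)[unfolded cks.simps(2)] obtain q1 q2 where q: "\<forall>z\<in>A. ((\<lambda>z. snd (f z)) has_derivative (\<lambda>h. fst h * q1 z + snd h * q2 z)) (at z)"
    "cks k A q1" "cks k A q2" by blast
  show ?case
    apply (simp only: Ck_on.simps)
    apply (rule exI[of _ "\<lambda>z. (p1 z, q1 z)"], rule exI[of _ "\<lambda>z. (p2 z, q2 z)"])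
    apply (intro conjI ballI Suc.IH)
    subgoal for z
    proof -
      assume z: "z \<in> A"
      have "((\<lambda>z. (fst (f z), snd (f z))) has_derivative
        (\<lambda>h. (fst h * p1 z + snd h * p2 z, fst h * q1 z + snd h * q2 z))) (at z)"
        by (rule has_derivative_Pair[OF p(1)[rule_format, OF z] q(1)[rule_format, OF z]])
      moreover have "(\<lambda>h. fst h *\<^sub>R (p1 z, q1 z) + snd h *\<^sub>R (p2 z, q2 z)) =
         (\<lambda>h. (fst h * p1 z + snd h * p2 z, fst h * q1 z + snd h * q2 z))"
        by (rule ext) (simp add: prod_eq_iff)
      moreover have "(\<lambda>z. (fst (f z), snd (f z))) = f" by simp
      ultimately show ?thesis by (simp only:)
    qed
    using p(2,3) q(2,3) by simp_all
qed


lemma inv2_aux: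
  fixes A B C D h1 h2 :: real assumes nz: "A*D - B*C \<noteq> 0"
  shows "(h1 * (D/(A*D-B*C)) + h2 * (-B/(A*D-B*C))) * A + (h1*(-C/(A*D-B*C)) + h2*(A/(A*D-B*C))) * B = h1"
    and "(h1 * (D/(A*D-B*C)) + h2 * (-B/(A*D-B*C))) * C + (h1*(-C/(A*D-B*C)) + h2*(A/(A*D-B*C))) * D = h2"
proof -
  have "(h1 * (D/(A*D-B*C)) + h2 * (-B/(A*D-B*C))) * A + (h1*(-C/(A*D-B*C)) + h2*(A/(A*D-B*C))) * B
     = h1 * ((A*D-B*C)/(A*D-B*C))" by (simp add: field_simps)
  then show "(h1 * (D/(A*D-B*C)) + h2 * (-B/(A*D-B*C))) * A + (h1*(-C/(A*D-B*C)) + h2*(A/(A*D-B*C))) * B = h1"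
    using nz by simp
  have "(h1 * (D/(A*D-B*C)) + h2 * (-B/(A*D-B*C))) * C + (h1*(-C/(A*D-B*C)) + h2*(A/(A*D-B*C))) * D
     = h2 * ((A*D-B*C)/(A*D-B*C))" by (simp add: field_simps)
  then show "(h1 * (D/(A*D-B*C)) + h2 * (-B/(A*D-B*C))) * C + (h1*(-C/(A*D-B*C)) + h2*(A/(A*D-B*C))) * D = h2"
    using nz by simp
qed

lemma diffeo_general:
  fixes f :: "real \<times> real \<Rightarrow> real \<times> real"
  assumes A: "open A" and inj: "inj_on f A"
    and sf1: "\<And>k. cks k A (\<lambda>z. fst (f z))" and sf2: "\<And>k. cks k A (\<lambda>z. snd (f z))"
    and der: "\<And>z. z \<in> A \<Longrightarrow> (f has_derivative (\<lambda>h. fst h *\<^sub>R (a z, c z) + snd h *\<^sub>R (b z, d z))) (at z)"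
    and sa: "\<And>k. cks k A a" and sb: "\<And>k. cks k A b" and sc: "\<And>k. cks k A c" and sd: "\<And>k. cks k A d"
    and nz: "\<And>z. z \<in> A \<Longrightarrow> a z * d z - b z * c z \<noteq> 0"
  shows "diffeo_onto f A (f ` A)"
proof -
  have contf: "continuous_on A f"
    by (rule continuous_at_imp_continuous_on) (blast intro: has_derivative_continuous der)
  have openB: "open (f ` A)" by (rule invariance_of_domain[OF contf A inj])
  have bij: "bij_betw f A (f ` A)" using inj by (simp add: inj_on_imp_bij_betw)
  have smf: "smooth_on A f" unfolding smooth_on_def using Ck_of_cks sf1 sf2 by blast
  define g where "g = inv_into A f"
  define \<Delta> where "\<Delta> z = a z * d z - b z * c z" for z
  have gf: "g (f x) = x" if "x \<in> A" for x unfolding g_def using inj that by (simp add: inv_into_f_f)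
  have gA: "g w \<in> A" if "w \<in> f ` A" for w unfolding g_def using that by (simp add: inv_into_into)
  have fg: "f (g w) = w" if "w \<in> f ` A" for w unfolding g_def using that by (simp add: f_inv_into_f)
  have dg: "(g has_derivative (\<lambda>h. fst h *\<^sub>R (d (g w) / \<Delta> (g w), - c (g w) / \<Delta> (g w))
       + snd h *\<^sub>R (- b (g w) / \<Delta> (g w), a (g w) / \<Delta> (g w)))) (at w)" if w: "w \<in> f ` A" for w
  proof -
    let ?x = "g w"
    have x: "?x \<in> A" using gA w .
    have nzx: "\<Delta> ?x \<noteq> 0" using nz x unfolding \<Delta>_def by blast
    have "(g has_derivative (\<lambda>h. fst h *\<^sub>R (d ?x / \<Delta> ?x, - c ?x / \<Delta> ?x)
       + snd h *\<^sub>R (- b ?x / \<Delta> ?x, a ?x / \<Delta> ?x))) (at (f ?x))"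
    proof (rule has_derivative_inverse_strong[OF A x contf gf der[OF x]])
      show "(\<lambda>h. fst h *\<^sub>R (a ?x, c ?x) + snd h *\<^sub>R (b ?x, d ?x)) \<circ>
        (\<lambda>h. fst h *\<^sub>R (d ?x / \<Delta> ?x, - c ?x / \<Delta> ?x) + snd h *\<^sub>R (- b ?x / \<Delta> ?x, a ?x / \<Delta> ?x)) = id"
        using nzx
        apply (auto simp: fun_eq_iff prod_eq_iff)
         apply (simp_all add: field_simps)
         apply (simp_all add: \<Delta>_def algebra_simps)
        done
    qed simp
    then show ?thesis using fg[OF w] by simp
  qed
  define \<phi>1 where "\<phi>1 z = d z * inverse (\<Delta> z)" for z
  define \<phi>2 where "\<phi>2 z = - b z * inverse (\<Delta> z)" for z
  define \<phi>3 where "\<phi>3 z = - c z * inverse (\<Delta> z)" for z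
  define \<phi>4 where "\<phi>4 z = a z * inverse (\<Delta> z)" for z
  have sD: "cks k A (\<lambda>z. inverse (\<Delta> z))" for k
    unfolding \<Delta>_def by (intro cks_inverse cks_diff cks_mult sa sb sc sd ballI nz)
  have s1: "cks k A \<phi>1" for k unfolding \<phi>1_def by (intro cks_mult sD sd)
  have s2: "cks k A \<phi>2" for k unfolding \<phi>2_def by (intro cks_mult sD cks_neg sb)
  have s3: "cks k A \<phi>3" for k unfolding \<phi>3_def by (intro cks_mult sD cks_neg sc)
  have s4: "cks k A \<phi>4" for k unfolding \<phi>4_def by (intro cks_mult sD sa)
  have dg1: "((\<lambda>w. fst (g w)) has_derivative (\<lambda>h. fst h * \<phi>1 (fst (g w), snd (g w)) + snd h * \<phi>2 (fst (g w), snd (g w)))) (at w)"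
    if w: "w \<in> f ` A" for w
    using has_derivative_fst[OF dg[OF w]] unfolding \<phi>1_def \<phi>2_def
    by (simp add: divide_inverse)
  have dg2: "((\<lambda>w. snd (g w)) has_derivative (\<lambda>h. fst h * \<phi>3 (fst (g w), snd (g w)) + snd h * \<phi>4 (fst (g w), snd (g w)))) (at w)"
    if w: "w \<in> f ` A" for w
    using has_derivative_snd[OF dg[OF w]] unfolding \<phi>3_def \<phi>4_def
    by (simp add: divide_inverse)
  have gB: "\<forall>w\<in>f ` A. (fst (g w), snd (g w)) \<in> A" using gA by simp
  have "cks k (f ` A) (\<lambda>w. fst (g w)) \<and> cks k (f ` A) (\<lambda>w. snd (g w))" for k
  proof (induction k)
    case 0
    show ?case unfolding cks.simps(1)
      by (intro conjI; rule continuous_at_imp_continuous_on) (blast intro: has_derivative_continuous dg1 dg2)+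
  next
    case (Suc k)
    have c1: "cks k (f ` A) (\<lambda>w. \<phi>1 (fst (g w), snd (g w)))" and c2: "cks k (f ` A) (\<lambda>w. \<phi>2 (fst (g w), snd (g w)))"
      and c3: "cks k (f ` A) (\<lambda>w. \<phi>3 (fst (g w), snd (g w)))" and c4: "cks k (f ` A) (\<lambda>w. \<phi>4 (fst (g w), snd (g w)))"
      using cks_comp[OF s1 conjunct1[OF Suc.IH] conjunct2[OF Suc.IH] gB]
        cks_comp[OF s2 conjunct1[OF Suc.IH] conjunct2[OF Suc.IH] gB]
        cks_comp[OF s3 conjunct1[OF Suc.IH] conjunct2[OF Suc.IH] gB]
        cks_comp[OF s4 conjunct1[OF Suc.IH] conjunct2[OF Suc.IH] gB] by this+
    show ?case
      apply (simp only: cks.simps(2))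
      apply (intro conjI)
       apply (rule exI[of _ "\<lambda>w. \<phi>1 (fst (g w), snd (g w))"], rule exI[of _ "\<lambda>w. \<phi>2 (fst (g w), snd (g w))"])
       apply (intro conjI ballI dg1 c1 c2, assumption)
      apply (rule exI[of _ "\<lambda>w. \<phi>3 (fst (g w), snd (g w))"], rule exI[of _ "\<lambda>w. \<phi>4 (fst (g w), snd (g w))"])
      apply (intro conjI ballI dg2 c3 c4, assumption)
      done
  qed
  then have smg: "smooth_on (f ` A) g" unfolding smooth_on_def using Ck_of_cks by blast
  show ?thesis unfolding diffeo_onto_def using A openB bij smf smg g_def by blast
qed


lemma H_deriv:
  fixes p q al be \<tau> :: real
  assumes P: "p * exp (al * \<tau>) < 1" and Q: "q * exp (be * \<tau>) < 1"
  shows "((\<lambda>\<tau>. be * ln (1 - p * exp (al * \<tau>)) - al * ln (1 - q * exp (be * \<tau>))) has_real_derivative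
     al * be * (q * exp (be * \<tau>) - p * exp (al * \<tau>)) / ((1 - p * exp (al * \<tau>)) * (1 - q * exp (be * \<tau>)))) (at \<tau>)"
proof -
  have "((\<lambda>\<tau>. be * ln (1 - p * exp (al * \<tau>)) - al * ln (1 - q * exp (be * \<tau>))) has_real_derivative
     be * (- (p * (exp (al * \<tau>) * al)) / (1 - p * exp (al * \<tau>))) - al * (- (q * (exp (be * \<tau>) * be)) / (1 - q * exp (be * \<tau>)))) (at \<tau>)"
    using P Q by (auto intro!: derivative_eq_intros) (auto simp: field_simps)
  moreover have "be * (- (p * (exp (al * \<tau>) * al)) / (1 - p * exp (al * \<tau>))) - al * (- (q * (exp (be * \<tau>) * be)) / (1 - q * exp (be * \<tau>)))
     = al * be * (q * exp (be * \<tau>) - p * exp (al * \<tau>)) / ((1 - p * exp (al * \<tau>)) * (1 - q * exp (be * \<tau>)))"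
    using P Q by (simp add: field_simps)
  ultimately show ?thesis by simp
qed

lemma core_lt:
  fixes p q al be s t s' t' :: real
  assumes ab: "al > be" and b0: "be > 0" and p0: "p > 0" and q0: "q > 0"
    and tt: "t < t'"
    and P1: "p * exp (al * t') < 1" and Q1: "q * exp (be * t') < 1"
    and sg: "(p * exp (al * t) > q * exp (be * t)) \<or> (p * exp (al * t') < q * exp (be * t'))"
  shows "be * ln (1 - p * exp (al * t)) - al * ln (1 - q * exp (be * t)) \<noteq>
         be * ln (1 - p * exp (al * t')) - al * ln (1 - q * exp (be * t'))"
proof -
  define H where "H \<tau> = be * ln (1 - p * exp (al * \<tau>)) - al * ln (1 - q * exp (be * \<tau>))" for \<tau>
  have bnd: "p * exp (al * \<tau>) < 1 \<and> q * exp (be * \<tau>) < 1" if "\<tau> \<le> t'" for \<tau>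
  proof -
    have "p * exp (al * \<tau>) \<le> p * exp (al * t')" using that ab b0 p0 by (intro mult_left_mono) (auto intro: mult_left_mono)
    moreover have "q * exp (be * \<tau>) \<le> q * exp (be * t')" using that ab b0 q0 by (intro mult_left_mono) (auto intro: mult_left_mono)
    ultimately show ?thesis using P1 Q1 by linarith
  qed
  have cmp: "p * exp (al * \<tau>) < q * exp (be * \<tau>) \<longleftrightarrow> ln p + al * \<tau> < ln q + be * \<tau>" for \<tau>
  proof -
    have "p * exp (al * \<tau>) = exp (ln p + al * \<tau>)" using p0 by (simp add: exp_add)
    moreover have "q * exp (be * \<tau>) = exp (ln q + be * \<tau>)" using q0 by (simp add: exp_add)
    ultimately show ?thesis by simp
  qed
  have cmp2: "p * exp (al * \<tau>) > q * exp (be * \<tau>) \<longleftrightarrow> ln p + al * \<tau> > ln q + be * \<tau>" for \<tau>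
  proof -
    have "p * exp (al * \<tau>) = exp (ln p + al * \<tau>)" using p0 by (simp add: exp_add)
    moreover have "q * exp (be * \<tau>) = exp (ln q + be * \<tau>)" using q0 by (simp add: exp_add)
    ultimately show ?thesis by simp
  qed
  from sg show ?thesis
  proof
    assume R: "p * exp (al * t) > q * exp (be * t)"
    have "H t' < H t"
    proof (rule DERIV_neg_imp_decreasing[OF tt])
      fix \<tau> assume "t \<le> \<tau>" "\<tau> \<le> t'"
      have bd: "p * exp (al * \<tau>) < 1" "q * exp (be * \<tau>) < 1" using bnd \<open>\<tau> \<le> t'\<close> by auto
      have "ln p + al * t > ln q + be * t" using R cmp2 by blast
      moreover have "(al - be) * t \<le> (al - be) * \<tau>" using \<open>t \<le> \<tau>\<close> ab by (intro mult_left_mono) auto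
      ultimately have "ln p + al * \<tau> > ln q + be * \<tau>" unfolding left_diff_distrib by linarith
      then have lt: "q * exp (be * \<tau>) < p * exp (al * \<tau>)" using cmp2 by blast
      have "al * be * (q * exp (be * \<tau>) - p * exp (al * \<tau>)) / ((1 - p * exp (al * \<tau>)) * (1 - q * exp (be * \<tau>))) < 0"
        using lt bd ab b0 by (intro divide_neg_pos mult_pos_neg mult_pos_pos) auto
      then show "\<exists>y. DERIV H \<tau> :> y \<and> y < 0"
        using H_deriv[OF bd] unfolding H_def by blast
    qed
    then show ?thesis unfolding H_def by simp
  next
    assume L: "p * exp (al * t') < q * exp (be * t')"
    have "H t < H t'"
    proof (rule DERIV_pos_imp_increasing[OF tt])
      fix \<tau> assume "t \<le> \<tau>" "\<tau> \<le> t'"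
      have bd: "p * exp (al * \<tau>) < 1" "q * exp (be * \<tau>) < 1" using bnd \<open>\<tau> \<le> t'\<close> by auto
      have "ln p + al * t' < ln q + be * t'" using L cmp by blast
      moreover have "(al - be) * \<tau> \<le> (al - be) * t'" using \<open>\<tau> \<le> t'\<close> ab by (intro mult_left_mono) auto
      ultimately have "ln p + al * \<tau> < ln q + be * \<tau>" unfolding left_diff_distrib by linarith
      then have lt: "q * exp (be * \<tau>) > p * exp (al * \<tau>)" using cmp by blast
      have "al * be * (q * exp (be * \<tau>) - p * exp (al * \<tau>)) / ((1 - p * exp (al * \<tau>)) * (1 - q * exp (be * \<tau>))) > 0"
        using lt bd ab b0 by (intro divide_pos_pos mult_pos_pos) auto
      then show "\<exists>y. DERIV H \<tau> :> y \<and> y > 0"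
        using H_deriv[OF bd] unfolding H_def by blast
    qed
    then show ?thesis unfolding H_def by simp
  qed
qed

lemma core_inj:
  fixes p q al be s t s' t' :: real
  assumes ab: "al > be" and b0: "be > 0" and p0: "p > 0" and q0: "q > 0"
    and P0: "p * exp (al * t) < 1" and P1: "p * exp (al * t') < 1"
    and Q0: "q * exp (be * t) < 1" and Q1: "q * exp (be * t') < 1"
    and sg: "(p * exp (al * t) > q * exp (be * t) \<and> p * exp (al * t') > q * exp (be * t'))
           \<or> (p * exp (al * t) < q * exp (be * t) \<and> p * exp (al * t') < q * exp (be * t'))"
    and e1: "(1 - p * exp (al * t)) * exp (al * s) = (1 - p * exp (al * t')) * exp (al * s')"
    and e2: "(1 - q * exp (be * t)) * exp (be * s) = (1 - q * exp (be * t')) * exp (be * s')"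
  shows "t = t' \<and> s = s'"
proof -
  have l1: "ln (1 - p * exp (al * t)) + al * s = ln (1 - p * exp (al * t')) + al * s'"
  proof -
    have "ln ((1 - p * exp (al * t)) * exp (al * s)) = ln ((1 - p * exp (al * t')) * exp (al * s'))"
      using e1 by simp
    then show ?thesis using P0 P1 by (simp add: ln_mult)
  qed
  have l2: "ln (1 - q * exp (be * t)) + be * s = ln (1 - q * exp (be * t')) + be * s'"
  proof -
    have "ln ((1 - q * exp (be * t)) * exp (be * s)) = ln ((1 - q * exp (be * t')) * exp (be * s'))"
      using e2 by simp
    then show ?thesis using Q0 Q1 by (simp add: ln_mult)
  qed
  have Heq: "be * ln (1 - p * exp (al * t)) - al * ln (1 - q * exp (be * t)) =
         be * ln (1 - p * exp (al * t')) - al * ln (1 - q * exp (be * t'))"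
    using arg_cong[OF l1, of "(*) be"] arg_cong[OF l2, of "(*) al"] by (simp add: algebra_simps)
  have tt: "t = t'"
  proof (rule linorder_cases[of t t'])
    assume "t < t'"
    from core_lt[OF ab b0 p0 q0 this P1 Q1] sg Heq show ?thesis by blast
  next
    assume "t' < t"
    from core_lt[OF ab b0 p0 q0 this P0 Q0] sg Heq show ?thesis by force
  qed
  then have "al * s = al * s'" using l1 by simp
  then show ?thesis using tt ab b0 by simp
qed


lemma F_eq: "Psi2 al be i st x = (1 - i + (i + (fst x - i) * exp (al * snd st) - (1 - i)) * exp (al * fst st),
   1 - i + (i + (snd x - i) * exp (be * snd st) - (1 - i)) * exp (be * fst st))"
  by (simp add: Psi2_def Psi_def Phi_def)

lemma Y_eq: "Psi al be i t x = (i + (fst x - i) * exp (al * t), i + (snd x - i) * exp (be * t))"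
  by (simp add: Psi_def Phi_def)

lemma Gamma_box: "Gamma al be \<subseteq> {0..1} \<times> {0..1}"
proof
  fix z assume "z \<in> Gamma al be"
  then obtain x1 x2 where z: "z = (x1, x2)" "0 \<le> x2" "x2 \<le> 1" "x2 powr (al / be) \<le> x1"
    "x1 \<le> 1 - (1 - x2) powr (al / be)" unfolding Gamma_def by auto
  have "0 \<le> x1" using z(4) powr_ge_zero[of x2 "al/be"] by linarith
  moreover have "x1 \<le> 1" using z(5) powr_ge_zero[of "1 - x2" "al/be"] by linarith
  ultimately show "z \<in> {0..1} \<times> {0..1}" using z by auto
qed

lemma int_Gamma: "z \<in> interior (Gamma al be) \<Longrightarrow> 0 < fst z \<and> fst z < 1 \<and> 0 < snd z \<and> snd z < 1"
proof -
  assume "z \<in> interior (Gamma al be)"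
  then have "z \<in> interior ({0..1::real} \<times> {0..1::real})" using interior_mono[OF Gamma_box] by blast
  then show ?thesis by (auto simp: interior_Times)
qed

lemma inj_concrete:
  fixes al be i :: real and x :: "real \<times> real"
  assumes ab: "al > be" and b0: "be > 0" and x: "x \<in> interior (Gamma al be)" and i: "i \<in> {0, 1}"
    and AY: "\<And>st. st \<in> A \<Longrightarrow> Psi al be i (snd st) x \<in> interior (Gamma al be)"
    and sgn: "\<And>st st'. st \<in> A \<Longrightarrow> st' \<in> A \<Longrightarrow>
       (fst (Psi al be i (snd st) x) > snd (Psi al be i (snd st) x) \<and> fst (Psi al be i (snd st') x) > snd (Psi al be i (snd st') x))
     \<or> (fst (Psi al be i (snd st) x) < snd (Psi al be i (snd st) x) \<and> fst (Psi al be i (snd st') x) < snd (Psi al be i (snd st') x))"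
  shows "inj_on (\<lambda>st. Psi2 al be i st x) A"
proof (rule inj_onI)
  fix st st' assume st: "st \<in> A" and st': "st' \<in> A" and eq: "Psi2 al be i st x = Psi2 al be i st' x"
  obtain s t where sst: "st = (s, t)" by force
  obtain s' t' where sst': "st' = (s', t')" by force
  obtain x1 x2 where xx: "x = (x1, x2)" by force
  have xb: "0 < x1" "x1 < 1" "0 < x2" "x2 < 1" using int_Gamma[OF x] xx by auto
  have Yb: "0 < i + (x1 - i) * exp (al * t)" "i + (x1 - i) * exp (al * t) < 1"
     "0 < i + (x2 - i) * exp (be * t)" "i + (x2 - i) * exp (be * t) < 1"
    using int_Gamma[OF AY[OF st]] unfolding sst xx Y_eq by auto
  have Yb': "0 < i + (x1 - i) * exp (al * t')" "i + (x1 - i) * exp (al * t') < 1"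
     "0 < i + (x2 - i) * exp (be * t')" "i + (x2 - i) * exp (be * t') < 1"
    using int_Gamma[OF AY[OF st']] unfolding sst' xx Y_eq by auto
  have sg: "(i + (x1 - i) * exp (al * t) > i + (x2 - i) * exp (be * t) \<and> i + (x1 - i) * exp (al * t') > i + (x2 - i) * exp (be * t'))
     \<or> (i + (x1 - i) * exp (al * t) < i + (x2 - i) * exp (be * t) \<and> i + (x1 - i) * exp (al * t') < i + (x2 - i) * exp (be * t'))"
    using sgn[OF st st'] unfolding sst sst' xx Y_eq by simp
  have e1: "1 - i + (i + (x1 - i) * exp (al * t) - (1 - i)) * exp (al * s) = 1 - i + (i + (x1 - i) * exp (al * t') - (1 - i)) * exp (al * s')"
    and e2: "1 - i + (i + (x2 - i) * exp (be * t) - (1 - i)) * exp (be * s) = 1 - i + (i + (x2 - i) * exp (be * t') - (1 - i)) * exp (be * s')"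
    using eq unfolding sst sst' xx F_eq by simp_all
  from i have "t = t' \<and> s = s'"
  proof
    assume i0: "i = 0"
    show ?thesis
    proof (rule core_inj[OF ab b0 xb(1) xb(3)])
      show "x1 * exp (al * t) < 1" "x1 * exp (al * t') < 1" "x2 * exp (be * t) < 1" "x2 * exp (be * t') < 1"
        using Yb Yb' i0 by auto
      show "(x1 * exp (al * t) > x2 * exp (be * t) \<and> x1 * exp (al * t') > x2 * exp (be * t'))
           \<or> (x1 * exp (al * t) < x2 * exp (be * t) \<and> x1 * exp (al * t') < x2 * exp (be * t'))"
        using sg i0 by simp
      show "(1 - x1 * exp (al * t)) * exp (al * s) = (1 - x1 * exp (al * t')) * exp (al * s')"
        using e1 i0 by (simp add: algebra_simps)
      show "(1 - x2 * exp (be * t)) * exp (be * s) = (1 - x2 * exp (be * t')) * exp (be * s')"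
        using e2 i0 by (simp add: algebra_simps)
    qed
  next
    assume "i \<in> {1}" then have i1: "i = 1" by simp
    show ?thesis
    proof (rule core_inj[OF ab b0, of "1 - x1" "1 - x2"])
      show "0 < 1 - x1" "0 < 1 - x2" using xb by auto
      show "(1 - x1) * exp (al * t) < 1" "(1 - x1) * exp (al * t') < 1" "(1 - x2) * exp (be * t) < 1" "(1 - x2) * exp (be * t') < 1"
        using Yb Yb' i1 by (auto simp: algebra_simps)
      show "((1 - x1) * exp (al * t) > (1 - x2) * exp (be * t) \<and> (1 - x1) * exp (al * t') > (1 - x2) * exp (be * t'))
           \<or> ((1 - x1) * exp (al * t) < (1 - x2) * exp (be * t) \<and> (1 - x1) * exp (al * t') < (1 - x2) * exp (be * t'))"
        using sg i1 by (auto simp: algebra_simps)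
      show "(1 - (1 - x1) * exp (al * t)) * exp (al * s) = (1 - (1 - x1) * exp (al * t')) * exp (al * s')"
        using e1 i1 by (simp add: algebra_simps)
      show "(1 - (1 - x2) * exp (be * t)) * exp (be * s) = (1 - (1 - x2) * exp (be * t')) * exp (be * s')"
        using e2 i1 by (simp add: algebra_simps)
    qed
  qed
  then show "st = st'" using sst sst' by simp
qed


lemma main_gen:
  fixes al be i :: real and x :: "real \<times> real"
  assumes ab: "al > be" and b0: "be > 0" and x: "x \<in> interior (Gamma al be)" and i: "i \<in> {0, 1}"
    and openA: "open A"
    and AY: "\<And>st. st \<in> A \<Longrightarrow> Psi al be i (snd st) x \<in> interior (Gamma al be)"
    and neq: "\<And>st. st \<in> A \<Longrightarrow> fst (Psi al be i (snd st) x) \<noteq> snd (Psi al be i (snd st) x)"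
    and sgn: "\<And>st st'. st \<in> A \<Longrightarrow> st' \<in> A \<Longrightarrow>
       (fst (Psi al be i (snd st) x) > snd (Psi al be i (snd st) x) \<and> fst (Psi al be i (snd st') x) > snd (Psi al be i (snd st') x))
     \<or> (fst (Psi al be i (snd st) x) < snd (Psi al be i (snd st) x) \<and> fst (Psi al be i (snd st') x) < snd (Psi al be i (snd st') x))"
  shows "diffeo_onto (\<lambda>st. Psi2 al be i st x) A ((\<lambda>st. Psi2 al be i st x) ` A)"
proof -
  define a where "a z = al * (i + (fst x - i) * exp (al * snd z) - (1 - i)) * exp (al * fst z)" for z :: "real \<times> real"
  define b where "b z = al * (fst x - i) * exp (al * snd z) * exp (al * fst z)" for z :: "real \<times> real"
  define c where "c z = be * (i + (snd x - i) * exp (be * snd z) - (1 - i)) * exp (be * fst z)" for z :: "real \<times> real"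
  define d where "d z = be * (snd x - i) * exp (be * snd z) * exp (be * fst z)" for z :: "real \<times> real"
  have sf1: "cks k A (\<lambda>z. fst (Psi2 al be i z x))" for k
    unfolding F_eq fst_conv by (intro cks_add cks_diff cks_mult cks_exp cks_const cks_fst cks_snd)
  have sf2: "cks k A (\<lambda>z. snd (Psi2 al be i z x))" for k
    unfolding F_eq snd_conv by (intro cks_add cks_diff cks_mult cks_exp cks_const cks_fst cks_snd)
  have sa: "cks k A a" for k
    unfolding a_def by (intro cks_add cks_diff cks_mult cks_exp cks_const cks_fst cks_snd)
  have sb: "cks k A b" for k
    unfolding b_def by (intro cks_add cks_diff cks_mult cks_exp cks_const cks_fst cks_snd)
  have sc: "cks k A c" for k
    unfolding c_def by (intro cks_add cks_diff cks_mult cks_exp cks_const cks_fst cks_snd)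
  have sd: "cks k A d" for k
    unfolding d_def by (intro cks_add cks_diff cks_mult cks_exp cks_const cks_fst cks_snd)
  have der: "((\<lambda>st. Psi2 al be i st x) has_derivative (\<lambda>h. fst h *\<^sub>R (a z, c z) + snd h *\<^sub>R (b z, d z))) (at z)" for z
  proof -
    have d1: "((\<lambda>z. 1 - i + (i + (fst x - i) * exp (al * snd z) - (1 - i)) * exp (al * fst z)) has_derivative
        (\<lambda>h. fst h * a z + snd h * b z)) (at z)"
      unfolding a_def b_def
      by (auto intro!: derivative_eq_intros simp: fun_eq_iff algebra_simps)
    have d2: "((\<lambda>z. 1 - i + (i + (snd x - i) * exp (be * snd z) - (1 - i)) * exp (be * fst z)) has_derivative
        (\<lambda>h. fst h * c z + snd h * d z)) (at z)"
      unfolding c_def d_def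
      by (auto intro!: derivative_eq_intros simp: fun_eq_iff algebra_simps)
    have e: "(\<lambda>h. fst h *\<^sub>R (a z, c z) + snd h *\<^sub>R (b z, d z)) = (\<lambda>h. (fst h * a z + snd h * b z, fst h * c z + snd h * d z))"
      by (rule ext) (simp add: prod_eq_iff)
    show ?thesis unfolding F_eq e by (rule has_derivative_Pair[OF d1 d2])
  qed
  have nz: "a z * d z - b z * c z \<noteq> 0" if z: "z \<in> A" for z
  proof -
    define Y1 where "Y1 = i + (fst x - i) * exp (al * snd z)"
    define Y2 where "Y2 = i + (snd x - i) * exp (be * snd z)"
    have "a z * d z - b z * c z = al * be * exp (al * fst z) * exp (be * fst z) * (1 - 2 * i) * (Y1 - Y2)"
      unfolding a_def b_def c_def d_def Y1_def Y2_def by (simp add: algebra_simps)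
    moreover have "Y1 \<noteq> Y2" using neq[OF z] unfolding Y_eq Y1_def Y2_def by simp
    moreover have "1 - 2 * i \<noteq> 0" using i by auto
    ultimately show ?thesis using ab b0 by simp
  qed
  show ?thesis
    by (rule diffeo_general[OF openA inj_concrete[OF ab b0 x i AY sgn] sf1 sf2 der sa sb sc sd nz])
qed


lemma open_Gamma_r: "open (Gamma_r al be)"
proof -
  have "Gamma_r al be = interior (Gamma al be) \<inter> {z. snd z < fst z}" by (auto simp: Gamma_r_def)
  then show ?thesis by (simp add: open_Int open_Collect_less continuous_on_fst continuous_on_snd continuous_on_id)
qed

lemma open_Gamma_l: "open (Gamma_l al be)"
proof -
  have "Gamma_l al be = interior (Gamma al be) \<inter> {z. fst z < snd z}" by (auto simp: Gamma_l_def)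
  then show ?thesis by (simp add: open_Int open_Collect_less continuous_on_fst continuous_on_snd continuous_on_id)
qed

lemma open_set_gen:
  assumes "open S"
  shows "open ({st. 0 < fst st} \<inter> {st. 0 < snd st} \<inter> (\<lambda>st. Psi2 al be i st x) -` interior (Gamma al be)
      \<inter> (\<lambda>st. Psi al be i (snd st) x) -` S)"
proof -
  have c1: "continuous (at z) (\<lambda>st. Psi2 al be i st x)" for z
    unfolding F_eq by (intro continuous_intros)
  have c2: "continuous (at z) (\<lambda>st. Psi al be i (snd st) x)" for z
    unfolding Y_eq by (intro continuous_intros)
  have o1: "open {st::real\<times>real. 0 < fst st}" by (intro open_Collect_less continuous_intros)
  have o2: "open {st::real\<times>real. 0 < snd st}" by (intro open_Collect_less continuous_intros)
  show ?thesis
    by (intro open_Int o1 o2 continuous_open_vimage[OF open_interior c1] continuous_open_vimage[OF assms c2])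
qed

theorem lemma6p1:
  fixes al be i :: real and x :: "real \<times> real"
  assumes "al > be" and "be > 0"
    and "x \<in> interior (Gamma al be)"
    and "i \<in> {0, 1}"
  shows "diffeo_onto (\<lambda>st. Psi2 al be i st x) (Rset al be i x)
           ((\<lambda>st. Psi2 al be i st x) ` Rset al be i x)
       \<and> diffeo_onto (\<lambda>st. Psi2 al be i st x) (Lset al be i x)
           ((\<lambda>st. Psi2 al be i st x) ` Lset al be i x)"
proof
  have "Rset al be i x = {st. 0 < fst st} \<inter> {st. 0 < snd st} \<inter> (\<lambda>st. Psi2 al be i st x) -` interior (Gamma al be)
      \<inter> (\<lambda>st. Psi al be i (snd st) x) -` Gamma_r al be" by (auto simp: Rset_def T2_def)
  then have oR: "open (Rset al be i x)" using open_set_gen[OF open_Gamma_r] by simp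
  show "diffeo_onto (\<lambda>st. Psi2 al be i st x) (Rset al be i x) ((\<lambda>st. Psi2 al be i st x) ` Rset al be i x)"
    by (rule main_gen[OF assms oR]) (auto simp: Rset_def Gamma_r_def)
next
  have "Lset al be i x = {st. 0 < fst st} \<inter> {st. 0 < snd st} \<inter> (\<lambda>st. Psi2 al be i st x) -` interior (Gamma al be)
      \<inter> (\<lambda>st. Psi al be i (snd st) x) -` Gamma_l al be" by (auto simp: Lset_def T2_def)
  then have oL: "open (Lset al be i x)" using open_set_gen[OF open_Gamma_l] by simp
  show "diffeo_onto (\<lambda>st. Psi2 al be i st x) (Lset al be i x) ((\<lambda>st. Psi2 al be i st x) ` Lset al be i x)"
    by (rule main_gen[OF assms oL]) (auto simp: Lset_def Gamma_l_def)
qed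

end
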